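(* Let $\mathcal{D}$ be a basic action theory of the situation calculus and let $\langle \mathcal{D}, \varphi, s\rangle$ be a causal setting. Then $$\mathcal{D}\models \forall a,a',ts,ts'.\; \mathit{CausesDir}(a,ts,\varphi,s)\land \mathit{CausesDir}(a',ts',\varphi,s)\supset a=a'\land ts=ts'.$$
   Context: Situation calculus: $S_0$ is the initial situation and $do(a,s)$ is the situation resulting from performing action $a$ in $s$. $s\sqsubset s'$ means $s'$ is reachable from $s$ by performing one or more actions, and $s\sqsubseteq s'$ abbreviates $s\sqsubset s'\lor s=s'$. $\mathit{Poss}(a,s)$ means $a$ is executable in $s$; $\mathit{Exec}(s)$ abbreviates $\forall a',s'.\,do(a',s')\sqsubseteq s\supset \mathit{Poss}(a',s')$ (in the temporal variant additionally $\mathit{start}(s')\le \mathit{time}(a')$). $s<s'$ abbreviates $s\sqsubset s'\land \mathit{Exec}(s')$, and $s\le s'$ abbreviates $s<s'\lor s=s'$. Situations carry time-stamps: $\mathit{timeStamp}(S_0)=0$ and $\mathit{timeStamp}(do(a,s))=\mathit{timeStamp}(s)+1$. For a situation-suppressed formula $\varphi$, $\varphi[s]$ denotes $\varphi$ with situation argument $s$ restored in all fluents. A causal setting $\langle\mathcal{D},\varphi,s\rangle$ consists of a ground situation $s$ and a situation-suppressed formula $\varphi$ with $\mathcal{D}\models \mathit{Exec}(s)\land\neg\varphi[S_0]\land\varphi[s]$. Direct (primary) cause: $$\mathit{CausesDir}(a,ts,\varphi,s)\doteq \exists s_a.\;\mathit{timeStamp}(s_a)=ts\land (S_0<do(a,s_a)\le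 s)\land\neg\varphi[s_a]\land\forall s'.(do(a,s_a)\le s'\le s\supset\varphi[s']).$$ *)

theory Defs
  imports Main
begin

text \<open>By the foundational axioms of any basic
action theory, the situations form a tree rooted at S0 with do injective; we represent
a situation by its (reversed) list of performed actions.\<close>

type_synonym 'a situation = "'a list"

definition S0 :: "'a situation" where "S0 = []"

definition sdo :: "'a \<Rightarrow> 'a situation \<Rightarrow> 'a situation" where
  "sdo a s = a # s"

definition sprec :: "'a situation \<Rightarrow> 'a situation \<Rightarrow> bool" where
  "sprec s s' \<longleftrightarrow> (\<exists>ys. ys \<noteq> [] \<and> s' = ys @ s)"

definition sprec_eq :: "'a situation \<Rightarrow> 'a situation \<Rightarrow> bool" where
  "sprec_eq s s' \<longleftrightarrow> sprec s s' \<or> s = s'"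

definition Exec :: "('a \<Rightarrow> 'a situation \<Rightarrow> bool) \<Rightarrow> 'a situation \<Rightarrow> bool" where
  "Exec Poss s \<longleftrightarrow> (\<forall>a' s'. sprec_eq (sdo a' s') s \<longrightarrow> Poss a' s')"

definition slt :: "('a \<Rightarrow> 'a situation \<Rightarrow> bool) \<Rightarrow> 'a situation \<Rightarrow> 'a situation \<Rightarrow> bool" where
  "slt Poss s s' \<longleftrightarrow> sprec s s' \<and> Exec Poss s'"

definition sle :: "('a \<Rightarrow> 'a situation \<Rightarrow> bool) \<Rightarrow> 'a situation \<Rightarrow> 'a situation \<Rightarrow> bool" where
  "sle Poss s s' \<longleftrightarrow> slt Poss s s' \<or> s = s'"

primrec timeStamp :: "'a situation \<Rightarrow> nat" where
  "timeStamp [] = 0"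
| "timeStamp (a # s) = timeStamp s + 1"

text \<open>A causal setting: phi is the (interpretation of the) situation-suppressed formula.\<close>
definition causal_setting ::
  "('a \<Rightarrow> 'a situation \<Rightarrow> bool) \<Rightarrow> ('a situation \<Rightarrow> bool) \<Rightarrow> 'a situation \<Rightarrow> bool" where
  "causal_setting Poss phi s \<longleftrightarrow> Exec Poss s \<and> \<not> phi S0 \<and> phi s"

definition CausesDir ::
  "('a \<Rightarrow> 'a situation \<Rightarrow> bool) \<Rightarrow> 'a \<Rightarrow> nat \<Rightarrow> ('a situation \<Rightarrow> bool) \<Rightarrow> 'a situation \<Rightarrow> bool" where
  "CausesDir Poss a ts phi s \<longleftrightarrow>
     (\<exists>sa. timeStamp sa = ts \<and> slt Poss S0 (sdo a sa) \<and> sle Poss (sdo a sa) s \<and> \<not> phi sa \<and>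
        (\<forall>s'. sle Poss (sdo a sa) s' \<and> sle Poss s' s \<longrightarrow> phi s'))"

end

theory Submission
  imports Defs
begin

lemma ts_len: "timeStamp s = length s"
  by (induction s) auto

lemma exec_suffix: "Exec Poss (ys @ x) \<Longrightarrow> Exec Poss x"
  unfolding Exec_def sprec_eq_def sprec_def sdo_def
proof (intro allI impI)
  fix a' s'
  assume h: "\<forall>a' s'. (\<exists>ysa. ysa \<noteq> [] \<and> ys @ x = ysa @ a' # s') \<or> a' # s' = ys @ x \<longrightarrow> Poss a' s'"
    and g: "(\<exists>ysa. ysa \<noteq> [] \<and> x = ysa @ a' # s') \<or> a' # s' = x"
  from g obtain us where "x = us @ a' # s'" by (metis append_Nil)
  hence "ys @ x = (ys @ us) @ a' # s'" by simp
  thus "Poss a' s'" using h by (cases "ys @ us = []") auto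
qed

lemma sle_iff: "Exec Poss s \<Longrightarrow> sle Poss x s \<longleftrightarrow> (\<exists>ys. s = ys @ x)"
  unfolding sle_def slt_def sprec_def
proof
  assume "Exec Poss s" "(\<exists>ys. ys \<noteq> [] \<and> s = ys @ x) \<and> Exec Poss s \<or> x = s"
  thus "\<exists>ys. s = ys @ x" by auto
next
  assume "Exec Poss s" "\<exists>ys. s = ys @ x"
  then obtain ys where "s = ys @ x" by blast
  thus "(\<exists>ys. ys \<noteq> [] \<and> s = ys @ x) \<and> Exec Poss s \<or> x = s"
    using \<open>Exec Poss s\<close> by (cases "ys = []") auto
qed

lemma suffix_cmp:
  assumes "s = ys @ x" "s = zs @ y" "length x \<le> length y"
  shows "\<exists>ws. y = ws @ x"
proof -
  have e: "ys @ x = zs @ y" using assms by simp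
  show ?thesis
  proof (cases "length ys \<le> length zs")
    case True
    then have "x = drop (length ys) zs @ y" using e by (simp add: append_eq_append_conv_if)
    then have "x = y" using assms(3) by (cases "drop (length ys) zs") auto
    thus ?thesis by blast
  next
    case False
    then have "drop (length zs) ys @ x = y" using e by (simp add: append_eq_append_conv_if)
    thus ?thesis by blast
  qed
qed

lemma main:
  assumes ex: "Exec Poss s"
    and A: "sle Poss (sdo a sa) s" "\<not> phi sa"
      "\<forall>s'. sle Poss (sdo a sa) s' \<and> sle Poss s' s \<longrightarrow> phi s'"
    and B: "sle Poss (sdo b sb) s" "\<not> phi sb"
      "\<forall>s'. sle Poss (sdo b sb) s' \<and> sle Poss s' s \<longrightarrow> phi s'"
    and lt: "length sa < length sb"
  shows False
proof -
  obtain ys where ys: "s = ys @ (a # sa)" using A(1) ex sle_iff unfolding sdo_def by metis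
  obtain zs where zs: "s = zs @ (b # sb)" using B(1) ex sle_iff unfolding sdo_def by metis
  have s1: "\<exists>ws. s = ws @ sb" using zs by auto
  have "length (a # sa) \<le> length sb" using lt by simp
  then obtain ws where ws: "sb = ws @ (a # sa)" using suffix_cmp[OF ys, of "zs @ [b]" sb] zs by auto
  have exb: "Exec Poss sb" using s1 ex exec_suffix by blast
  have "sle Poss (sdo a sa) sb" using sle_iff[OF exb] ws unfolding sdo_def by blast
  moreover have "sle Poss sb s" using sle_iff[OF ex] s1 by blast
  ultimately have "phi sb" using A(3) by blast
  thus False using B(2) by simp
qed

theorem lemma5p1:
  fixes Poss :: "'a \<Rightarrow> 'a situation \<Rightarrow> bool"
    and phi :: "'a situation \<Rightarrow> bool"
    and s :: "'a situation"
  assumes "causal_setting Poss phi s"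
  shows "\<forall>a a' ts ts'. CausesDir Poss a ts phi s \<and> CausesDir Poss a' ts' phi s
           \<longrightarrow> a = a' \<and> ts = ts'"
proof (intro allI impI)
  fix a a' ts ts'
  assume h: "CausesDir Poss a ts phi s \<and> CausesDir Poss a' ts' phi s"
  have ex: "Exec Poss s" using assms causal_setting_def by blast
  obtain sa where A: "timeStamp sa = ts" "sle Poss (sdo a sa) s" "\<not> phi sa"
      "\<forall>s'. sle Poss (sdo a sa) s' \<and> sle Poss s' s \<longrightarrow> phi s'"
    using h unfolding CausesDir_def by blast
  obtain sb where B: "timeStamp sb = ts'" "sle Poss (sdo a' sb) s" "\<not> phi sb"
      "\<forall>s'. sle Poss (sdo a' sb) s' \<and> sle Poss s' s \<longrightarrow> phi s'"
    using h unfolding CausesDir_def by blast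
  have "\<not> length sa < length sb" using main[OF ex A(2-4) B(2-4)] by blast
  moreover have "\<not> length sb < length sa" using main[OF ex B(2-4) A(2-4)] by blast
  ultimately have eq: "length sa = length sb" by simp
  obtain ys where ys: "s = ys @ (a # sa)" using A(2) ex sle_iff unfolding sdo_def by metis
  obtain zs where zs: "s = zs @ (a' # sb)" using B(2) ex sle_iff unfolding sdo_def by metis
  have "a # sa = a' # sb" using ys zs eq
    by (simp add: append_eq_append_conv)
  thus "a = a' \<and> ts = ts'" using A(1) B(1) by simp
qed

end
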